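(* Let $s>0$ and let $n>m>s$ be integers. For an integer $a>s$ set $P_a=\sum_{k=1}^a(-1)^k\binom{2a}{a-k}k^{2s}$. Then $c_{n,s}P_n=c_{m,s}P_m$.
   Context: Let $N\ge1$. $\sigma_s$ is a Borel probability measure on $\mathbb S^{N-1}$ and $\nu_s(U)=\int_0^\infty\int_{\mathbb S^{N-1}}\chi_U(r\theta)r^{-1-2s}\sigma_s(d\theta)\,dr$. $M_{s,\sigma_s}(e)=\int|e\cdot\theta|^{2s}\sigma_s(d\theta)$ and $e_s$ is a maximum point of $M_{s,\sigma_s}$ on $\mathbb S^{N-1}$. For an integer $m>s$, $c_{m,s}>0$ is defined by $\frac2{c_{m,s}}=2^m\int_{\mathbb R^N}(1-\cos(e_s\cdot y))^m\,\nu_s(dy)$. *)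

theory Defs
  imports "HOL-Probability.Probability"
begin

text \<open>The L\'evy-type measure nu_s on R^N (here an abstract euclidean space 'a):
  nu_s(U) = int_0^infty int_sphere chi_U(r theta) r^(-1-2s) sigma(d theta) dr,
  realised as the push-forward of (r^(-1-2s) dr on (0,infty)) x sigma under (r,theta) |-> r theta.\<close>
definition nu_s :: "real \<Rightarrow> 'a::euclidean_space measure \<Rightarrow> 'a measure" where
  "nu_s s \<sigma> = distr
     (pair_measure (density (restrict_space lborel {0<..}) (\<lambda>r. ennreal (r powr (-1 - 2 * s)))) \<sigma>)
     borel (\<lambda>(r, \<theta>). r *\<^sub>R \<theta>)"

definition M_s :: "real \<Rightarrow> 'a::euclidean_space measure \<Rightarrow> 'a \<Rightarrow> real" where
  "M_s s \<sigma> e = (\<integral>\<theta>. \<bar>e \<bullet> \<theta>\<bar> powr (2 * s) \<partial>\<sigma>)"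

definition c_ms :: "nat \<Rightarrow> real \<Rightarrow> 'a::euclidean_space measure \<Rightarrow> 'a \<Rightarrow> real" where
  "c_ms m s \<sigma> e = 2 / (2 ^ m * enn2real (\<integral>\<^sup>+ y. ennreal ((1 - cos (e \<bullet> y)) ^ m) \<partial>(nu_s s \<sigma>)))"

definition P_a :: "nat \<Rightarrow> real \<Rightarrow> real" where
  "P_a a s = (\<Sum>k=1..a. (-1) ^ k * real ((2 * a) choose (a - k)) * real k powr (2 * s))"

end

theory Submission
  imports Defs
begin


lemma W_expand:
  fixes x :: real
  shows "(2 - 2*cos x)^m = (\<Sum>i\<le>2*m. (-1)^(m+i) * real (2*m choose i) * cos ((real i - real m) * x))"
proof -
  have c1: "complex_of_real (2 - 2*cos x) = - cis (-x) * (1 - cis x)^2"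
  proof -
    have h: "cos x * (cos x * 2) + sin x * (sin x * 2) = 2"
      using sin_cos_squared_add[of x] by algebra
    show ?thesis apply (simp add: power2_eq_square algebra_simps cis_mult cos_of_real complex_eq_iff)
      using h by linarith
  qed
  have "complex_of_real ((2 - 2*cos x)^m) = (- cis (-x) * (1 - cis x)^2)^m"
    by (metis c1 of_real_power)
  also have "\<dots> = (-1)^m * cis (- (real m * x)) * (-cis x + 1)^(2*m)"
  proof -
    have "(- cis (-x) * (1 - cis x)^2)^m = (-1)^m * (cis (-x))^m * ((1 - cis x)^2)^m"
      by (simp only: power_mult_distrib power_minus[of "cis (-x)"] mult.assoc)
    also have "(cis (-x))^m = cis (- (real m * x))" using Complex.DeMoivre[of "-x" m] by simp
    also have "((1 - cis x)^2)^m = (-cis x + 1)^(2*m)" by (simp add: power_mult)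
    finally show ?thesis .
  qed
  also have "(-cis x + 1)^(2*m) = (\<Sum>i\<le>2*m. of_nat (2*m choose i) * (-cis x)^i)"
    by (subst binomial_ring) simp
  also have "(-1)^m * cis (- (real m * x)) * \<dots> = (\<Sum>i\<le>2*m. complex_of_real ((-1)^(m+i) * real (2*m choose i)) * cis ((real i - real m) * x))"
    unfolding sum_distrib_left
  proof (rule sum.cong [OF refl])
    fix i assume "i \<in> {..2*m}"
    have f1: "(-cis x)^i = (-1)^i * cis (real i * x)" by (subst power_minus) (simp add: Complex.DeMoivre)
    have f2: "cis (- (real m * x)) * cis (real i * x) = cis ((real i - real m) * x)"
      by (simp add: cis_mult left_diff_distrib)
    have "(-1)^m * cis (- (real m * x)) * (of_nat (2*m choose i) * (-cis x)^i) =
       ((-1)^m * (-1)^i * of_nat (2*m choose i)) * (cis (- (real m * x)) * cis (real i * x))"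
      unfolding f1 by (simp only: mult.assoc mult.commute mult.left_commute)
    also have "\<dots> = complex_of_real ((-1)^(m+i) * real (2*m choose i)) * cis ((real i - real m) * x)"
      unfolding f2 by (simp add: power_add)
    finally show "(-1)^m * cis (- (real m * x)) * (of_nat (2*m choose i) * (-cis x)^i) =
      complex_of_real ((-1)^(m+i) * real (2*m choose i)) * cis ((real i - real m) * x)" .
  qed
  finally have "complex_of_real ((2 - 2*cos x)^m) = (\<Sum>i\<le>2*m. complex_of_real ((-1)^(m+i) * real (2*m choose i)) * cis ((real i - real m) * x))" .
  hence "Re (complex_of_real ((2 - 2*cos x)^m)) = Re (\<Sum>i\<le>2*m. complex_of_real ((-1)^(m+i) * real (2*m choose i)) * cis ((real i - real m) * x))" by simp
  thus ?thesis by (simp add: Re_sum)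
qed



definition kf :: "real \<Rightarrow> nat \<Rightarrow> real \<Rightarrow> real \<Rightarrow> real" where
  "kf s N c t = (if 0 < t then (2 - 2 * cos (c * t)) ^ N * t powr (-1 - 2 * s) else 0)"

lemma kf_measurable [measurable]: "kf s N c \<in> borel_measurable borel"
  unfolding kf_def by measurable

lemma one_minus_cos_le: "2 - 2 * cos (t::real) \<le> t^2"
proof -
  have "cos t = 1 - 2 * sin (t/2) ^ 2" using cos_double_sin[of "t/2"] by simp
  hence "2 - 2 * cos t = 4 * sin (t/2) ^ 2" by simp
  also have "sin (t/2) ^ 2 \<le> (t/2)^2"
    using abs_sin_x_le_abs_x[of "t/2"] by (metis abs_ge_zero power2_abs power_mono)
  finally show ?thesis by (simp add: power2_eq_square)
qed

lemma two_minus_cos_nonneg: "0 \<le> 2 - 2 * cos (t::real)"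
  using cos_le_one[of t] by simp

lemma kf_nonneg: "0 \<le> kf s N c t"
  unfolding kf_def using two_minus_cos_nonneg by auto

lemma kf_integrable:
  assumes s: "s > 0" and N: "real N > s"
  shows "integrable lborel (kf s N 1)"
proof -
  define a where "a = 2 * real N - 1 - 2 * s"
  define e where "e = -1 - 2 * s"
  have a: "a > -1" using N unfolding a_def by simp
  have e: "e < -1" using s unfolding e_def by simp
  have i1: "set_integrable lebesgue {0..1} (\<lambda>x::real. x powr a)"
    by (intro nonnegative_absolutely_integrable_1 integrable_on_powr_from_0 a) auto
  have "(\<lambda>x::real. x powr e) integrable_on {1..}"
    using has_integral_powr_to_inf[OF e, of 1] unfolding integrable_on_def by auto
  hence i2: "set_integrable lebesgue {1..} (\<lambda>x::real. x powr e)"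
    by (intro nonnegative_absolutely_integrable_1) auto
  define g where "g x = indicator {0..1} x *\<^sub>R x powr a + 4^N * (indicator {1..} x *\<^sub>R x powr e)" for x :: real
  have gi: "integrable lebesgue g"
    unfolding g_def using i1 i2 unfolding set_integrable_def by (intro Bochner_Integration.integrable_add Bochner_Integration.integrable_mult_right) auto
  have "integrable lebesgue (kf s N 1)"
  proof (rule Bochner_Integration.integrable_bound [OF gi])
    show "kf s N 1 \<in> borel_measurable lebesgue"
      by (intro measurable_completion) measurable
    show "AE x in lebesgue. norm (kf s N 1 x) \<le> norm (g x)"
    proof (rule AE_I2)
      fix t :: real
      have g0: "0 \<le> g t" unfolding g_def by (auto simp: indicator_def)
      have "kf s N 1 t \<le> g t"
      proof (cases "0 < t")
        case False thus ?thesis using g0 by (simp add: kf_def)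
      next
        case t: True
        show ?thesis
        proof (cases "t \<le> 1")
          case True
          have "(2 - 2 * cos t) ^ N \<le> (t^2)^N"
            by (intro power_mono one_minus_cos_le two_minus_cos_nonneg)
          hence "(2 - 2 * cos t) ^ N * t powr e \<le> (t^2)^N * t powr e"
            by (intro mult_right_mono) auto
          also have "(t^2)^N * t powr e = t powr a"
          proof -
            have "(t^2)^N = t powr (real (2*N))"
              unfolding powr_realpow[OF t] by (simp add: power_mult)
            hence "(t^2)^N * t powr e = t powr (real (2*N) + e)" by (simp add: powr_add)
            moreover have "real (2*N) + e = a" by (simp add: a_def e_def)
            ultimately show ?thesis by simp
          qed
          also have "\<dots> \<le> g t"
          proof -
            have "g t = t powr a + 4^N * (indicator {1..} t * t powr e)" using True t by (simp add: g_def)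
            moreover have "0 \<le> 4^N * (indicator {1..} t * t powr e)" by simp
            ultimately show ?thesis by linarith
          qed
          finally show ?thesis using t by (simp add: kf_def e_def)
        next
          case False
          have "(2 - 2 * cos t) ^ N \<le> 4^N"
            by (intro power_mono two_minus_cos_nonneg) (use cos_ge_minus_one[of t] in linarith)
          hence "(2 - 2 * cos t) ^ N * t powr e \<le> 4^N * t powr e"
            by (intro mult_right_mono) auto
          also have "\<dots> \<le> g t" using False t by (simp add: g_def indicator_def)
          finally show ?thesis using t by (simp add: kf_def e_def)
        qed
      qed
      thus "norm (kf s N 1 t) \<le> norm (g t)" using kf_nonneg[of s N 1 t] g0 by simp
    qed
  qed
  thus ?thesis by (subst (asm) integrable_completion) simp
qed

lemma kf_even: "kf s N (- c) = kf s N c"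
  by (simp add: kf_def fun_eq_iff)

lemma kf_abs: "kf s N \<bar>c\<bar> = kf s N c"
  by (cases "c \<ge> 0") (simp_all add: kf_even)

lemma kf_zero: "N > 0 \<Longrightarrow> kf s N 0 = (\<lambda>t. 0)"
  by (simp add: kf_def fun_eq_iff)

lemma kf_stretch_pos:
  assumes c: "c > 0"
  shows "kf s N c t = c powr (1 + 2 * s) * kf s N 1 (0 + c * t)"
proof (cases "t > 0")
  case True
  hence "(c * t) powr (-1 - 2 * s) = c powr (-1 - 2 * s) * t powr (-1 - 2 * s)"
    using c by (simp add: powr_mult)
  moreover have "c powr (1 + 2 * s) * c powr (-1 - 2 * s) = 1"
    using c by (simp add: powr_add [symmetric])
  ultimately show ?thesis using True c
    by (simp add: kf_def)
next
  case False
  thus ?thesis using c by (simp add: kf_def zero_less_mult_iff)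
qed

lemma kf_scale:
  assumes s: "s > 0" and N: "real N > s"
  shows "integrable lborel (kf s N c) \<and> integral\<^sup>L lborel (kf s N c) = \<bar>c\<bar> powr (2 * s) * integral\<^sup>L lborel (kf s N 1)"
proof (cases "c = 0")
  case True
  have "N > 0" using N s by simp
  thus ?thesis using True s by (simp add: kf_zero)
next
  case False
  define d where "d = \<bar>c\<bar>"
  have d: "d > 0" using False by (simp add: d_def)
  have eq: "kf s N c = (\<lambda>t. d powr (1 + 2 * s) * kf s N 1 (0 + d * t))"
    using kf_stretch_pos[OF d] kf_abs[of s N c] by (simp add: d_def fun_eq_iff)
  have int1: "integrable lborel (kf s N 1)" by (rule kf_integrable[OF s N])
  have int2: "integrable lborel (\<lambda>t. kf s N 1 (0 + d * t))"
    using lborel_integrable_real_affine[OF int1, of d 0] d by simp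
  have "integral\<^sup>L lborel (kf s N 1) = d * integral\<^sup>L lborel (\<lambda>t. kf s N 1 (0 + d * t))"
    using lborel_integral_real_affine[of d "kf s N 1" 0] d by simp
  hence "integral\<^sup>L lborel (\<lambda>t. kf s N 1 (0 + d * t)) = integral\<^sup>L lborel (kf s N 1) / d"
    using d by (simp add: field_simps)
  moreover have "d powr (1 + 2 * s) / d = d powr (2 * s)"
    using d by (simp add: powr_add powr_diff)
  ultimately show ?thesis unfolding eq using int2
    by (simp add: d_def) (metis (no_types, lifting) times_divide_eq_left times_divide_eq_right)
qed



definition al :: "nat \<Rightarrow> nat \<Rightarrow> real" where
  "al m i = (-1) ^ (m + i) * real (2 * m choose i)"

definition dd :: "nat \<Rightarrow> nat \<Rightarrow> real" where
  "dd m i = real i - real m"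

lemma W_expand':
  "(2 - 2 * cos x) ^ m = (\<Sum>i\<le>2*m. al m i * cos (dd m i * x))"
  unfolding al_def dd_def by (rule W_expand)

definition Hs :: "nat \<Rightarrow> nat \<Rightarrow> real \<Rightarrow> real" where
  "Hs m n t = (\<Sum>i\<le>2*m. \<Sum>j\<le>2*n. al m i * al n j * cos (dd m i * dd n j * t))"

lemma Hs_sym: "Hs m n t = Hs n m t"
  unfolding Hs_def
  by (subst sum.swap) (simp add: mult_ac)

lemma sum_kf:
  "(\<Sum>i\<le>2*m. al m i * kf s n (dd m i) t) = (if 0 < t then t powr (-1 - 2 * s) * Hs m n t else 0)"
proof (cases "0 < t")
  case True
  have "(\<Sum>i\<le>2*m. al m i * kf s n (dd m i) t) = (\<Sum>i\<le>2*m. t powr (-1 - 2 * s) * (\<Sum>j\<le>2*n. al m i * al n j * cos (dd m i * dd n j * t)))"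
  proof (rule sum.cong [OF refl])
    fix i
    have "(2 - 2 * cos (dd m i * t)) ^ n = (\<Sum>j\<le>2*n. al n j * cos (dd n j * (dd m i * t)))"
      by (rule W_expand')
    thus "al m i * kf s n (dd m i) t = t powr (-1 - 2 * s) * (\<Sum>j\<le>2*n. al m i * al n j * cos (dd m i * dd n j * t))"
      using True by (simp add: kf_def sum_distrib_left mult_ac)
  qed
  also have "\<dots> = t powr (-1 - 2 * s) * Hs m n t"
    by (simp add: Hs_def sum_distrib_left)
  finally show ?thesis using True by simp
next
  case False
  thus ?thesis by (simp add: kf_def)
qed

definition AA :: "real \<Rightarrow> nat \<Rightarrow> real" where
  "AA s N = integral\<^sup>L lborel (kf s N 1)"

definition QQ :: "real \<Rightarrow> nat \<Rightarrow> real" where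
  "QQ s m = (\<Sum>i\<le>2*m. al m i * \<bar>dd m i\<bar> powr (2 * s))"

lemma QA:
  assumes s: "s > 0" and n: "real n > s"
  shows "QQ s m * AA s n = integral\<^sup>L lborel (\<lambda>t. if 0 < t then t powr (-1 - 2 * s) * Hs m n t else 0)"
proof -
  have "QQ s m * AA s n = (\<Sum>i\<le>2*m. al m i * integral\<^sup>L lborel (kf s n (dd m i)))"
    unfolding QQ_def AA_def sum_distrib_right
  proof (rule sum.cong [OF refl])
    fix i
    have "integral\<^sup>L lborel (kf s n (dd m i)) = \<bar>dd m i\<bar> powr (2 * s) * integral\<^sup>L lborel (kf s n 1)"
      using kf_scale[OF s n, of "dd m i"] by (rule conjunct2)
    thus "al m i * \<bar>dd m i\<bar> powr (2 * s) * integral\<^sup>L lborel (kf s n 1) = al m i * integral\<^sup>L lborel (kf s n (dd m i))"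
      by (simp only: mult.assoc)
  qed
  also have "\<dots> = integral\<^sup>L lborel (\<lambda>t. \<Sum>i\<le>2*m. al m i * kf s n (dd m i) t)"
  proof (subst Bochner_Integration.integral_sum)
    fix i
    show "integrable lborel (\<lambda>t. al m i * kf s n (dd m i) t)"
      using kf_scale[OF s n, of "dd m i"] by (intro Bochner_Integration.integrable_mult_right) simp
  qed simp
  also have "\<dots> = integral\<^sup>L lborel (\<lambda>t. if 0 < t then t powr (-1 - 2 * s) * Hs m n t else 0)"
    by (simp add: sum_kf)
  finally show ?thesis .
qed

lemma QA_sym:
  assumes s: "s > 0" and n: "real n > s" and m: "real m > s"
  shows "QQ s m * AA s n = QQ s n * AA s m"
proof -
  have e: "Hs m n = Hs n m" by (rule ext, rule Hs_sym)
  show ?thesis by (subst QA[OF s n], subst QA[OF s m], subst e) (rule refl)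
qed



lemma QQ_P:
  assumes s: "s > 0"
  shows "QQ s m = 2 * P_a m s"
proof -
  define f where "f i = al m i * \<bar>dd m i\<bar> powr (2 * s)" for i
  define g where "g k = (-1) ^ k * real ((2 * m) choose (m - k)) * real k powr (2 * s)" for k
  have split: "{..2*m} = {..<m} \<union> ({m} \<union> {m+1..2*m})" by auto
  have "QQ s m = sum f {..<m} + (f m + sum f {m+1..2*m})"
    unfolding QQ_def f_def[symmetric] split
    by (subst sum.union_disjoint; auto)+
  moreover have "f m = 0" using s by (simp add: f_def dd_def)
  moreover have "sum f {..<m} = sum g {1..m}"
  proof (rule sum.reindex_bij_witness[where i = "\<lambda>b. m - b" and j = "\<lambda>a. m - a"])
    fix a assume a: "a \<in> {..<m}"
    show "m - (m - a) = a" using a by simp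
    show "m - a \<in> {1..m}" using a by auto
    have "g (m - a) = (-1) ^ (m - a) * real ((2 * m) choose a) * real (m - a) powr (2 * s)"
      using a by (simp add: g_def)
    also have "(-1::real) ^ (m - a) = (-1) ^ (m + a)"
    proof -
      have e: "m + a = (m - a) + 2 * a" using a by simp
      show ?thesis unfolding e by (simp add: power_add power_mult)
    qed
    also have "real (m - a) = \<bar>dd m a\<bar>" using a by (simp add: dd_def of_nat_diff)
    finally show "g (m - a) = f a" by (simp add: f_def al_def)
  next
    fix b assume b: "b \<in> {1..m}"
    show "m - (m - b) = b" using b by simp
    show "m - b \<in> {..<m}" using b by auto
  qed
  moreover have "sum f {m+1..2*m} = sum g {1..m}"
  proof -
    have "sum f {m+1..2*m} = sum f {1+m..m+m}" by (simp add: mult_2 add.commute)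
    also have "\<dots> = sum (\<lambda>k. f (k + m)) {1..m}" by (rule sum.shift_bounds_cl_nat_ivl)
    also have "\<dots> = sum g {1..m}"
    proof (rule sum.cong [OF refl])
      fix k assume k: "k \<in> {1..m}"
      have "(2 * m) choose (k + m) = (2 * m) choose (m - k)"
        using k binomial_symmetric[of "k + m" "2 * m"] by simp
      moreover have "(-1::real) ^ (m + (k + m)) = (-1) ^ k"
      proof -
        have e: "m + (k + m) = k + 2 * m" by simp
        show ?thesis unfolding e by (simp add: power_add power_mult)
      qed
      ultimately show "f (k + m) = g k" by (simp add: f_def g_def al_def dd_def)
    qed
    finally show ?thesis .
  qed
  ultimately show ?thesis by (simp add: P_a_def g_def[abs_def])
qed

lemma AA_pos:
  assumes s: "s > 0" and N: "real N > s"
  shows "AA s N > 0"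
proof -
  define c0 where "c0 = pi powr (-1 - 2 * s)"
  have c0: "c0 > 0" by (simp add: c0_def)
  have "N > 0" using s N by simp
  have le: "c0 * indicator {pi/2..pi} t \<le> kf s N 1 t" for t :: real
  proof (cases "t \<in> {pi/2..pi}")
    case True
    hence t: "pi/2 \<le> t" "t \<le> pi" by auto
    have tpos: "t > 0" using t pi_gt_zero by linarith
    have "cos t \<le> cos (pi/2)" using t by (intro cos_monotone_0_pi_le) auto
    hence "1 \<le> 2 - 2 * cos t" by simp
    hence p1: "1 \<le> (2 - 2 * cos t) ^ N" by (rule one_le_power)
    have p2: "c0 \<le> t powr (-1 - 2 * s)" unfolding c0_def
      using s t tpos by (intro powr_mono2') auto
    have "c0 \<le> (2 - 2 * cos t) ^ N * t powr (-1 - 2 * s)"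
      using mult_mono[OF p1 p2] c0 by simp
    thus ?thesis using True tpos by (simp add: kf_def)
  next
    case False
    thus ?thesis by (simp add: kf_def)
  qed
  have "c0 * (pi / 2) = integral\<^sup>L lborel (\<lambda>t. c0 * indicator {pi/2..pi} t)"
    by simp
  also have "\<dots> \<le> AA s N" unfolding AA_def
    using le kf_integrable[OF s N] by (intro integral_mono) auto
  finally have "c0 * (pi / 2) \<le> AA s N" .
  moreover have "0 < c0 * (pi / 2)" using c0 by simp
  ultimately show ?thesis by linarith
qed



lemma inner_integral:
  fixes c :: real
  assumes s: "s > 0" and m: "real m > s"
  shows "(\<integral>\<^sup>+ r. ennreal ((1 - cos (r * c)) ^ m)
          \<partial>density (restrict_space lborel {0<..}) (\<lambda>r. ennreal (r powr (-1 - 2 * s))))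
        = ennreal (\<bar>c\<bar> powr (2 * s) * (AA s m / 2 ^ m))"
proof -
  have "(\<integral>\<^sup>+ r. ennreal ((1 - cos (r * c)) ^ m)
          \<partial>density (restrict_space lborel {0<..}) (\<lambda>r. ennreal (r powr (-1 - 2 * s))))
     = (\<integral>\<^sup>+ r. ennreal (r powr (-1 - 2 * s)) * ennreal ((1 - cos (r * c)) ^ m) \<partial>restrict_space lborel {0<..})"
    by (subst nn_integral_density) (auto intro!: measurable_restrict_space1)
  also have "\<dots> = (\<integral>\<^sup>+ r. ennreal (r powr (-1 - 2 * s)) * ennreal ((1 - cos (r * c)) ^ m) * indicator {0<..} r \<partial>lborel)"
    by (subst nn_integral_restrict_space) auto
  also have "\<dots> = (\<integral>\<^sup>+ r. ennreal (kf s m c r / 2 ^ m) \<partial>lborel)"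
  proof (rule nn_integral_cong)
    fix r :: real
    show "ennreal (r powr (-1 - 2 * s)) * ennreal ((1 - cos (r * c)) ^ m) * indicator {0<..} r = ennreal (kf s m c r / 2 ^ m)"
    proof (cases "r > 0")
      case True
      have "(2 - 2 * cos (c * r)) ^ m = 2 ^ m * (1 - cos (r * c)) ^ m"
        by (simp add: power_mult_distrib [symmetric] mult.commute right_diff_distrib)
      hence "kf s m c r / 2 ^ m = r powr (-1 - 2 * s) * (1 - cos (r * c)) ^ m"
        using True by (simp add: kf_def)
      moreover have "0 \<le> (1 - cos (r * c)) ^ m" by simp
      ultimately show ?thesis using True by (simp add: ennreal_mult)
    next
      case False
      thus ?thesis by (simp add: kf_def)
    qed
  qed
  also have "\<dots> = ennreal (integral\<^sup>L lborel (\<lambda>r. kf s m c r / 2 ^ m))"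
    using kf_scale[OF s m, of c] kf_nonneg[of s m c]
    by (intro nn_integral_eq_integral) (auto intro!: Bochner_Integration.integrable_divide)
  also have "integral\<^sup>L lborel (\<lambda>r. kf s m c r / 2 ^ m) = \<bar>c\<bar> powr (2 * s) * (AA s m / 2 ^ m)"
    using kf_scale[OF s m, of c] by (simp add: AA_def)
  finally show ?thesis .
qed

lemma nu_integral:
  fixes \<sigma> :: "'a::euclidean_space measure" and e :: 'a
  assumes sets: "sets \<sigma> = sets borel" and P: "prob_space \<sigma>" and s: "s > 0" and m: "real m > s"
  shows "(\<integral>\<^sup>+ y. ennreal ((1 - cos (e \<bullet> y)) ^ m) \<partial>nu_s s \<sigma>)
       = (\<integral>\<^sup>+ \<theta>. ennreal (\<bar>e \<bullet> \<theta>\<bar> powr (2 * s)) \<partial>\<sigma>) * ennreal (AA s m / 2 ^ m)"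
proof -
  define D where "D = density (restrict_space lborel {0<..}) (\<lambda>r::real. ennreal (r powr (-1 - 2 * s)))"
  interpret sig: prob_space \<sigma> by (rule P)
  have sfR: "sigma_finite_measure (restrict_space lborel {0::real<..})"
    by (rule sigma_finite_measure_restrict_space[OF sigma_finite_lborel]) simp
  have "sigma_finite_measure D"
    unfolding D_def
    by (subst sigma_finite_measure.sigma_finite_iff_density_finite[OF sfR])
       (auto intro!: measurable_restrict_space1)
  then interpret D: sigma_finite_measure D .
  interpret pair_sigma_finite D \<sigma> ..
  have id_meas [measurable]: "(\<lambda>x. x) \<in> measurable \<sigma> borel"
    by (rule measurable_ident_sets[OF sets])
  have idD [measurable]: "(\<lambda>x. x) \<in> measurable D borel"
    unfolding D_def by (auto intro!: measurable_restrict_space1)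
  have T [measurable]: "(\<lambda>p. fst p *\<^sub>R snd p) \<in> borel_measurable (D \<Otimes>\<^sub>M \<sigma>)"
  proof -
    have f1: "(\<lambda>p. fst p) \<in> borel_measurable (D \<Otimes>\<^sub>M \<sigma>)"
      using measurable_compose[OF measurable_fst idD] by simp
    have f2: "(\<lambda>p. snd p) \<in> borel_measurable (D \<Otimes>\<^sub>M \<sigma>)"
      using measurable_compose[OF measurable_snd id_meas] by simp
    show ?thesis using f1 f2 by (rule borel_measurable_scaleR)
  qed
  have T' : "(\<lambda>(r, \<theta>). r *\<^sub>R \<theta>) \<in> measurable (D \<Otimes>\<^sub>M \<sigma>) borel"
    using T by (simp add: case_prod_beta')
  have F [measurable]: "(\<lambda>y::'a. ennreal ((1 - cos (e \<bullet> y)) ^ m)) \<in> borel_measurable borel"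
    by measurable
  have F2: "(\<lambda>p. ennreal ((1 - cos (e \<bullet> (fst p *\<^sub>R snd p))) ^ m)) \<in> borel_measurable (D \<Otimes>\<^sub>M \<sigma>)"
    using measurable_compose[OF T F] by simp
  have "(\<integral>\<^sup>+ y. ennreal ((1 - cos (e \<bullet> y)) ^ m) \<partial>nu_s s \<sigma>)
      = (\<integral>\<^sup>+ p. ennreal ((1 - cos (e \<bullet> (fst p *\<^sub>R snd p))) ^ m) \<partial>(D \<Otimes>\<^sub>M \<sigma>))"
    unfolding nu_s_def D_def[symmetric]
    by (subst nn_integral_distr[OF T']) (auto simp: case_prod_beta')
  also have "\<dots> = (\<integral>\<^sup>+ \<theta>. (\<integral>\<^sup>+ r. ennreal ((1 - cos (e \<bullet> (r *\<^sub>R \<theta>))) ^ m) \<partial>D) \<partial>\<sigma>)"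
    using nn_integral_snd[OF F2] by simp
  also have "\<dots> = (\<integral>\<^sup>+ \<theta>. ennreal (\<bar>e \<bullet> \<theta>\<bar> powr (2 * s)) * ennreal (AA s m / 2 ^ m) \<partial>\<sigma>)"
  proof (rule nn_integral_cong)
    fix \<theta> :: 'a
    have "(\<integral>\<^sup>+ r. ennreal ((1 - cos (e \<bullet> (r *\<^sub>R \<theta>))) ^ m) \<partial>D) = (\<integral>\<^sup>+ r. ennreal ((1 - cos (r * (e \<bullet> \<theta>))) ^ m) \<partial>D)"
      by simp
    also have "\<dots> = ennreal (\<bar>e \<bullet> \<theta>\<bar> powr (2 * s) * (AA s m / 2 ^ m))"
      unfolding D_def by (rule inner_integral[OF s m])
    also have "\<dots> = ennreal (\<bar>e \<bullet> \<theta>\<bar> powr (2 * s)) * ennreal (AA s m / 2 ^ m)"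
      by (rule ennreal_mult') simp
    finally show "(\<integral>\<^sup>+ r. ennreal ((1 - cos (e \<bullet> (r *\<^sub>R \<theta>))) ^ m) \<partial>D) = ennreal (\<bar>e \<bullet> \<theta>\<bar> powr (2 * s)) * ennreal (AA s m / 2 ^ m)" .
  qed
  also have "\<dots> = (\<integral>\<^sup>+ \<theta>. ennreal (\<bar>e \<bullet> \<theta>\<bar> powr (2 * s)) \<partial>\<sigma>) * ennreal (AA s m / 2 ^ m)"
    by (rule nn_integral_multc) measurable
  finally show ?thesis .
qed



lemma c_ms_eq:
  fixes \<sigma> :: "'a::euclidean_space measure" and e :: 'a
  assumes sets: "sets \<sigma> = sets borel" and P: "prob_space \<sigma>" and s: "s > 0" and m: "real m > s"
  shows "c_ms m s \<sigma> e = 2 / (enn2real (\<integral>\<^sup>+ \<theta>. ennreal (\<bar>e \<bullet> \<theta>\<bar> powr (2 * s)) \<partial>\<sigma>) * AA s m)"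
proof -
  have A: "AA s m > 0" by (rule AA_pos[OF s m])
  have "c_ms m s \<sigma> e = 2 / (2 ^ m * (enn2real (\<integral>\<^sup>+ \<theta>. ennreal (\<bar>e \<bullet> \<theta>\<bar> powr (2 * s)) \<partial>\<sigma>) * (AA s m / 2 ^ m)))"
    unfolding c_ms_def nu_integral[OF sets P s m] using A
    by (simp add: enn2real_mult)
  thus ?thesis by simp
qed

theorem lemma3p3:
  fixes \<sigma> :: "'a::euclidean_space measure" and s :: real and m n :: nat and e :: 'a
  assumes "prob_space \<sigma>" and "sets \<sigma> = sets borel" and "emeasure \<sigma> (sphere 0 1) = 1"
    and "e \<in> sphere 0 1" and "\<forall>e'\<in>sphere 0 1. M_s s \<sigma> e' \<le> M_s s \<sigma> e"
    and "s > 0" and "real m > s" and "n > m"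
  shows "c_ms n s \<sigma> e * P_a n s = c_ms m s \<sigma> e * P_a m s"
proof -
  have s: "s > 0" and m: "real m > s" and n: "real n > s" using assms by auto
  define g where "g = enn2real (\<integral>\<^sup>+ \<theta>. ennreal (\<bar>e \<bullet> \<theta>\<bar> powr (2 * s)) \<partial>\<sigma>)"
  have cm: "c_ms m s \<sigma> e = 2 / (g * AA s m)"
    unfolding g_def by (rule c_ms_eq[OF assms(2,1) s m])
  have cn: "c_ms n s \<sigma> e = 2 / (g * AA s n)"
    unfolding g_def by (rule c_ms_eq[OF assms(2,1) s n])
  have Am: "AA s m > 0" by (rule AA_pos[OF s m])
  have An: "AA s n > 0" by (rule AA_pos[OF s n])
  have key: "P_a m s * AA s n = P_a n s * AA s m"
    using QA_sym[OF s n m] QQ_P[OF s, of m] QQ_P[OF s, of n] by simp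
  show ?thesis
  proof (cases "g = 0")
    case True
    thus ?thesis by (simp add: cm cn)
  next
    case False
    have "2 / (g * AA s n) * P_a n s = 2 / (g * AA s m) * P_a m s"
      using False Am An key by (simp add: field_simps)
    thus ?thesis by (simp add: cm cn)
  qed
qed

end
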